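(* $$\sum_{i,j,k\ge0}\frac{q^{i^2+j^2+k^2}}{(q)_{i+j-k}(q)_{i+k-j}(q)_{j+k-i}}=\sum_{i,j\ge0}\frac{q^{i^2+j^2+(i-j)^2}}{(q)_{2i}(q)_{2j}}.$$
   Context: $q$ is complex with $|q|<1$. $(q)_n=\prod_{j=1}^n(1-q^j)$ for $n\ge0$ and $1/(q)_n:=0$ for $n<0$. *)

theory Defs
  imports "HOL-Analysis.Analysis"
begin

definition qpoch :: "complex \<Rightarrow> nat \<Rightarrow> complex" where
  "qpoch q n = (\<Prod>j=1..n. 1 - q ^ j)"

definition inv_qpoch :: "complex \<Rightarrow> int \<Rightarrow> complex" where
  "inv_qpoch q n = (if n < 0 then 0 else 1 / qpoch q (nat n))"

end

theory Submission
  imports Defs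
begin


lemma qpoch_0[simp]: "qpoch q 0 = 1" by (simp add: qpoch_def)
lemma qpoch_Suc: "qpoch q (Suc n) = qpoch q n * (1 - q ^ Suc n)"
  by (simp add: qpoch_def)

lemma qpoch_nz:
  assumes "norm q < 1" shows "qpoch q n \<noteq> 0"
proof -
  have "1 - q ^ j \<noteq> 0" if "j \<ge> 1" for j
  proof
    assume "1 - q ^ j = 0"
    hence "norm (q ^ j) = 1" by simp
    moreover have "norm (q ^ j) < 1"
      using assms that by (simp add: norm_power power_less_one_iff)
    ultimately show False by simp
  qed
  thus ?thesis unfolding qpoch_def by (auto simp: prod_zero_iff)
qed



context fixes q :: complex assumes q: "norm q < 1"
begin

definition g :: "nat \<Rightarrow> nat \<Rightarrow> nat \<Rightarrow> complex" where
  "g n a t = q ^ (t^2 + a*t) / (qpoch q t * qpoch q (n - t) * qpoch q (a + t))"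

lemma stepA:
  assumes "s \<le> n"
  shows "(1 - q ^ Suc s) * g (Suc n) a (Suc s) = q ^ (a + s + 1) * g n (a+1) s"
proof -
  have nz: "qpoch q m \<noteq> 0" for m using qpoch_nz[OF q] .
  have e: "q ^ ((Suc s)^2 + a * Suc s) = q ^ (s^2 + (a + 1) * s) * q ^ (a + s + 1)"
    by (simp add: power_add[symmetric] power2_eq_square algebra_simps)
  have p: "qpoch q (Suc s) = qpoch q s * (1 - q ^ Suc s)" by (rule qpoch_Suc)
  have m: "Suc n - Suc s = n - s" by simp
  have a: "a + Suc s = (a + 1) + s" by simp
  have nz1: "1 - q ^ Suc s \<noteq> 0" using nz[of "Suc s"] by (simp add: qpoch_Suc)
  show ?thesis unfolding g_def e p m a using nz nz1
    by (simp add: field_simps del: power_Suc)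
qed

lemma stepB:
  assumes "t \<le> n"
  shows "q ^ t * (1 - q ^ (Suc n - t)) * g (Suc n) a t = (1 - q ^ (a + t + 1)) * g n (a+1) t"
proof -
  have nz: "qpoch q m \<noteq> 0" for m using qpoch_nz[OF q] .
  have e: "q ^ (t^2 + (a+1) * t) = q ^ t * q ^ (t^2 + a * t)"
    by (simp add: power_add[symmetric] algebra_simps)
  have m: "Suc n - t = Suc (n - t)" using assms by simp
  have p1: "qpoch q (Suc (n - t)) = qpoch q (n-t) * (1 - q ^ Suc (n-t))" by (rule qpoch_Suc)
  have p2: "qpoch q (a + 1 + t) = qpoch q (a + t) * (1 - q ^ (a + t + 1))"
    using qpoch_Suc[of q "a+t"] by simp
  have nz1: "1 - q ^ Suc (n-t) \<noteq> 0" using nz[of "Suc (n-t)"] by (simp add: qpoch_Suc)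
  have nz2: "1 - q ^ (a+t+1) \<noteq> 0" using nz[of "Suc (a+t)"] by (simp add: qpoch_Suc)
  show ?thesis unfolding g_def e m p1 p2 using nz nz1 nz2
    by (simp add: field_simps)
qed

lemma keyF: "(\<Sum>t\<le>n. g n a t) = 1 / (qpoch q n * qpoch q (a + n))"
proof (induction n arbitrary: a)
  case 0
  then show ?case by (simp add: g_def)
next
  case (Suc n)
  have nz: "qpoch q m \<noteq> 0" for m using qpoch_nz[OF q] .
  have nzs: "1 - q ^ Suc n \<noteq> 0" using nz[of "Suc n"] by (simp add: qpoch_Suc)
  have split: "(1 - q ^ Suc n) * g (Suc n) a t
      = (1 - q ^ t) * g (Suc n) a t + q ^ t * (1 - q ^ (Suc n - t)) * g (Suc n) a t"
    if "t \<le> Suc n" for t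
  proof -
    have "q ^ t * q ^ (Suc n - t) = q ^ Suc n" using that by (simp add: power_add[symmetric])
    thus ?thesis by (simp add: algebra_simps)
  qed
  have "(1 - q ^ Suc n) * (\<Sum>t\<le>Suc n. g (Suc n) a t)
      = (\<Sum>t\<le>Suc n. (1 - q ^ t) * g (Suc n) a t)
        + (\<Sum>t\<le>Suc n. q ^ t * (1 - q ^ (Suc n - t)) * g (Suc n) a t)"
    unfolding sum_distrib_left sum.distrib[symmetric] by (rule sum.cong[OF refl]) (rule split, simp)
  also have "(\<Sum>t\<le>Suc n. (1 - q ^ t) * g (Suc n) a t)
      = (\<Sum>s\<le>n. q ^ (a + s + 1) * g n (a+1) s)"
    by (subst sum.atMost_Suc_shift) (simp del: power_Suc add: stepA)
  also have "(\<Sum>t\<le>Suc n. q ^ t * (1 - q ^ (Suc n - t)) * g (Suc n) a t)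
      = (\<Sum>s\<le>n. (1 - q ^ (a + s + 1)) * g n (a+1) s)"
    by (subst sum.atMost_Suc) (simp add: stepB)
  also have "(\<Sum>s\<le>n. q ^ (a + s + 1) * g n (a+1) s) + (\<Sum>s\<le>n. (1 - q ^ (a + s + 1)) * g n (a+1) s)
      = (\<Sum>s\<le>n. g n (a+1) s)"
    by (simp add: sum.distrib[symmetric] algebra_simps)
  also have "\<dots> = 1 / (qpoch q n * qpoch q (a + 1 + n))" by (rule Suc.IH)
  finally have eq: "(1 - q ^ Suc n) * (\<Sum>t\<le>Suc n. g (Suc n) a t) = 1 / (qpoch q n * qpoch q (a + 1 + n))" (is "?u * ?S = ?R") .
  have "?S = (?u * ?S) / ?u" using nzs by (simp del: power_Suc)
  also have "\<dots> = ?R / ?u" by (simp only: eq)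
  also have "\<dots> = 1 / (qpoch q (Suc n) * qpoch q (a + Suc n))"
    by (simp add: qpoch_Suc del: power_Suc)
  finally show ?case .
qed

end


lemma inv_qpoch_nat[simp]: "inv_qpoch q (int n) = 1 / qpoch q n"
  by (simp add: inv_qpoch_def)
lemma inv_qpoch_neg: "m < 0 \<Longrightarrow> inv_qpoch q m = 0"
  by (simp add: inv_qpoch_def)

definition tm :: "complex \<Rightarrow> nat \<Rightarrow> nat \<Rightarrow> nat \<Rightarrow> complex" where
  "tm q i j k = q ^ (i^2 + j^2 + k^2)
            * inv_qpoch q (int i + int j - int k)
            * inv_qpoch q (int i + int k - int j)
            * inv_qpoch q (int j + int k - int i)"

lemma tm_sym: "tm q i j k = tm q j i k"
  unfolding tm_def by (simp add: algebra_simps)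

context fixes q :: complex assumes q: "norm q < 1"
begin

lemma T_le:
  assumes "j \<le> i"
  shows "(\<Sum>k\<le>i+j. tm q i j k) = q ^ (i^2 + j^2 + (nat \<bar>int i - int j\<bar>)^2) / (qpoch q (2*i) * qpoch q (2*j))"
proof -
  obtain d where i: "i = j + d" using assms le_Suc_ex by blast
  have ud: "{..i+j} = {..<d} \<union> {0 + d..2*j + d}" unfolding i by auto
  have z: "(\<Sum>k<d. tm q i j k) = 0"
  proof (rule sum.neutral, intro ballI)
    fix k assume "k \<in> {..<d}"
    hence "int j + int k - int i < 0" unfolding i by auto
    thus "tm q i j k = 0" unfolding tm_def by (simp add: inv_qpoch_neg)
  qed
  define c where "c = (j+d)^2 + j^2 + d^2"
  have tt: "tm q i j (t + d) = q ^ c * g q (2*j) (2*d) t" if "t \<in> {0..2*j}" for t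
  proof -
    have t: "t \<le> 2*j" using that by simp
    have e1: "int i + int j - int (t + d) = int (2*j - t)" unfolding i using t by simp
    have e2: "int i + int (t+d) - int j = int (2*d + t)" unfolding i by simp
    have e3: "int j + int (t+d) - int i = int t" unfolding i by simp
    have exn: "i^2 + j^2 + (t+d)^2 = c + (t^2 + 2*d*t)"
      unfolding c_def i by (simp add: power2_eq_square algebra_simps mult_2 mult_2_right)
    have ex: "q ^ (i^2 + j^2 + (t+d)^2) = q ^ c * q ^ (t^2 + 2*d*t)"
      unfolding exn by (simp add: power_add)
    show ?thesis unfolding tm_def e1 e2 e3 ex inv_qpoch_nat g_def[OF q] by (simp add: algebra_simps)
  qed
  have "(\<Sum>k\<le>i+j. tm q i j k) = (\<Sum>k\<in>{0 + d..2*j + d}. tm q i j k)"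
    unfolding ud by (subst sum.union_disjoint) (auto simp: z)
  also have "\<dots> = (\<Sum>t\<in>{0..2*j}. tm q i j (t + d))" by (rule sum.shift_bounds_cl_nat_ivl)
  also have "\<dots> = (\<Sum>t\<in>{0..2*j}. q ^ c * g q (2*j) (2*d) t)" by (rule sum.cong[OF refl]) (rule tt)
  also have "\<dots> = q ^ c * (\<Sum>t\<le>2*j. g q (2*j) (2*d) t)" by (simp add: sum_distrib_left atLeast0AtMost)
  also have "\<dots> = q ^ c / (qpoch q (2*j) * qpoch q (2*d + 2*j))" by (simp add: keyF[OF q])
  also have "\<dots> = q ^ (i^2 + j^2 + (nat \<bar>int i - int j\<bar>)^2) / (qpoch q (2*i) * qpoch q (2*j))"
    unfolding c_def i by (simp add: algebra_simps)
  finally show ?thesis .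
qed

lemma T_all:
  "(\<Sum>k\<le>i+j. tm q i j k) = q ^ (i^2 + j^2 + (nat \<bar>int i - int j\<bar>)^2) / (qpoch q (2*i) * qpoch q (2*j))"
proof (cases "j \<le> i")
  case True then show ?thesis by (rule T_le)
next
  case False
  hence "i \<le> j" by simp
  from T_le[OF this] have "(\<Sum>k\<le>j+i. tm q j i k) = q ^ (j^2 + i^2 + (nat \<bar>int j - int i\<bar>)^2) / (qpoch q (2*j) * qpoch q (2*i))" .
  moreover have "nat \<bar>int j - int i\<bar> = nat \<bar>int i - int j\<bar>" by simp
  ultimately show ?thesis by (simp add: tm_sym add.commute mult.commute)
qed

end


lemma exp_bound_aux:
  fixes r x :: real
  assumes r: "0 \<le> r" "r < 1" and x: "0 \<le> x" "x \<le> r"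
  shows "exp (- (x / (1 - r))) \<le> 1 - x"
proof -
  define y where "y = x / (1 - r)"
  have y0: "0 \<le> y" using r x by (simp add: y_def)
  have "1 + y \<le> exp y" by (rule exp_ge_add_one_self)
  hence "exp (-y) \<le> 1 / (1 + y)" using y0
    by (simp add: exp_minus divide_simps)
  also have "1 / (1 + y) = (1 - r) / (1 - r + x)" using r unfolding y_def by (simp add: field_simps)
  also have "\<dots> \<le> 1 - x"
  proof -
    have e: "(1 - x) * (1 - r + x) = (1 - r) + x * (r - x)" by (simp add: algebra_simps)
    have "0 \<le> x * (r - x)" using x by simp
    hence "1 - r \<le> (1 - x) * (1 - r + x)" unfolding e by linarith
    thus ?thesis using r x by (simp add: divide_simps)
  qed
  finally show ?thesis unfolding y_def .
qed

lemma norm_qpoch_ge: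
  fixes q :: complex
  assumes q: "norm q < 1"
  shows "exp (- ((norm q - norm q ^ Suc n) / (1 - norm q)^2)) \<le> norm (qpoch q n)"
proof (induction n)
  case 0 then show ?case by simp
next
  case (Suc n)
  define r where "r = norm q"
  have r: "0 \<le> r" "r < 1" using q by (auto simp: r_def)
  define x where "x = r ^ Suc n"
  have "r ^ Suc n \<le> r ^ 1" using r by (intro power_decreasing) auto
  hence x: "0 \<le> x" "x \<le> r" using r unfolding x_def by auto
  have nz: "1 - r \<noteq> 0" using r by simp
  have A0: "r - r ^ Suc (Suc n) = (r - r ^ Suc n) + x * (1 - r)" by (simp add: x_def algebra_simps)
  have A: "(r - r ^ Suc (Suc n)) / (1 - r)^2 = (r - r ^ Suc n) / (1 - r)^2 + x / (1 - r)"
    unfolding A0 using nz by (simp add: add_divide_distrib power2_eq_square)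
  have "exp (- ((r - r ^ Suc (Suc n)) / (1 - r)^2))
      = exp (- ((r - r ^ Suc n) / (1 - r)^2)) * exp (- (x / (1 - r)))"
    unfolding A by (simp add: exp_add[symmetric])
  also have "\<dots> \<le> norm (qpoch q n) * (1 - x)"
    using Suc.IH exp_bound_aux[OF r x] unfolding r_def
    by (intro mult_mono) auto
  also have "1 - x \<le> norm (1 - q ^ Suc n)"
  proof -
    have "norm (1::complex) - norm (q ^ Suc n) \<le> norm (1 - q ^ Suc n)" by (rule norm_triangle_ineq2)
    thus ?thesis unfolding x_def r_def by (simp only: norm_power norm_one)
  qed
  hence "norm (qpoch q n) * (1 - x) \<le> norm (qpoch q n) * norm (1 - q ^ Suc n)"
    by (intro mult_left_mono) auto
  also have "\<dots> = norm (qpoch q (Suc n))" by (simp add: qpoch_Suc norm_mult del: power_Suc)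
  finally show ?case unfolding r_def .
qed

definition CC :: "complex \<Rightarrow> real" where "CC q = exp (norm q / (1 - norm q)^2)"

lemma norm_inv_qpoch_le:
  fixes q :: complex
  assumes q: "norm q < 1"
  shows "norm (inv_qpoch q m) \<le> CC q"
proof (cases "m < 0")
  case True thus ?thesis by (simp add: inv_qpoch_neg CC_def)
next
  case False
  then obtain n where m: "m = int n" by (metis nonneg_int_cases not_less)
  define r where "r = norm q"
  have r: "0 \<le> r" "r < 1" using q by (auto simp: r_def)
  have pos: "0 < exp (- ((r - r ^ Suc n) / (1 - r)^2))" by simp
  have ge: "exp (- ((r - r ^ Suc n) / (1 - r)^2)) \<le> norm (qpoch q n)"
    using norm_qpoch_ge[OF q] unfolding r_def .
  have "norm (inv_qpoch q m) = 1 / norm (qpoch q n)" by (simp add: m norm_divide)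
  also have "\<dots> \<le> 1 / exp (- ((r - r ^ Suc n) / (1 - r)^2))"
  proof (rule divide_left_mono)
    show "0 < norm (qpoch q n) * exp (- ((r - r ^ Suc n) / (1 - r)^2))"
      using pos ge by (intro mult_pos_pos) linarith+
  qed (use ge in auto)
  also have "\<dots> = exp ((r - r ^ Suc n) / (1 - r)^2)" by (simp add: exp_minus field_simps)
  also have "\<dots> \<le> exp (r / (1 - r)^2)" using r by (intro exp_mono divide_right_mono) auto
  finally show ?thesis unfolding CC_def r_def .
qed

lemma norm_inv_qpoch_nat_le:
  fixes q :: complex
  assumes q: "norm q < 1"
  shows "norm (1 / qpoch q n) \<le> CC q"
  using norm_inv_qpoch_le[OF q, of "int n"] by simp



lemma prod_summable:
  fixes a :: "'x \<Rightarrow> real" and b :: "'y \<Rightarrow> real"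
  assumes a0: "\<And>x. a x \<ge> 0" and b0: "\<And>y. b y \<ge> 0"
    and a: "a summable_on UNIV" and b: "b summable_on UNIV"
  shows "(\<lambda>(x,y). a x * b y) summable_on UNIV"
proof -
  have "(\<lambda>(x,y). a x * b y) summable_on Sigma UNIV (\<lambda>_. UNIV)"
  proof (rule summable_on_SigmaI[where g = "\<lambda>x. a x * infsum b UNIV"])
    fix x :: 'x assume "x \<in> UNIV"
    show "((\<lambda>y. case (x, y) of (x, y) \<Rightarrow> a x * b y) has_sum a x * infsum b UNIV) UNIV"
      using has_sum_cmult_right[OF has_sum_infsum[OF b], of "a x"] by simp
  next
    show "(\<lambda>x. a x * infsum b UNIV) summable_on UNIV" by (rule summable_on_cmult_left[OF a])
  next
    fix x y show "0 \<le> (case (x, y) of (x, y) \<Rightarrow> a x * b y)" using a0 b0 by simp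
  qed
  thus ?thesis by simp
qed

lemma geom_summable:
  fixes r :: real assumes "0 \<le> r" "r < 1"
  shows "(\<lambda>n::nat. r ^ n) summable_on UNIV"
  using assms by (subst summable_on_UNIV_nonneg_real_iff) (auto intro: summable_geometric)

lemma pow_sq_le:
  fixes r :: real assumes "0 \<le> r" "r \<le> 1"
  shows "r ^ (n^2) \<le> r ^ n"
  using assms by (intro power_decreasing) (auto simp: power2_eq_square)

context fixes q :: complex assumes q: "norm q < 1"
begin

lemma tm_bound: "norm (tm q i j k) \<le> CC q ^ 3 * (norm q ^ i * (norm q ^ j * norm q ^ k))"
proof -
  define r where "r = norm q"
  have r: "0 \<le> r" "r \<le> 1" using q by (auto simp: r_def)
  have C0: "0 \<le> CC q" by (simp add: CC_def)
  have "norm (tm q i j k) = r ^ (i^2+j^2+k^2) * (norm (inv_qpoch q (int i + int j - int k))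
      * norm (inv_qpoch q (int i + int k - int j)) * norm (inv_qpoch q (int j + int k - int i)))"
    unfolding tm_def r_def by (simp add: norm_mult norm_power)
  also have "\<dots> \<le> r ^ (i^2+j^2+k^2) * (CC q * CC q * CC q)"
    by (intro mult_left_mono mult_mono norm_inv_qpoch_le[OF q]) (auto simp: r C0)
  also have "r ^ (i^2+j^2+k^2) \<le> r ^ i * (r ^ j * r ^ k)"
  proof -
    have "r ^ (i^2+j^2+k^2) = r^(i^2) * (r^(j^2) * r^(k^2))" by (simp add: power_add mult.assoc)
    also have "\<dots> \<le> r ^ i * (r ^ j * r ^ k)"
      using pow_sq_le[OF r, of i] pow_sq_le[OF r, of j] pow_sq_le[OF r, of k] r
      by (intro mult_mono) auto
    finally show ?thesis .
  qed
  hence "r ^ (i^2+j^2+k^2) * (CC q * CC q * CC q) \<le> r ^ i * (r ^ j * r ^ k) * (CC q * CC q * CC q)"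
    using C0 by (intro mult_right_mono) auto
  finally show ?thesis unfolding r_def by (simp add: power3_eq_cube mult_ac)
qed

lemma geomq: "(\<lambda>n::nat. norm q ^ n) summable_on UNIV"
  using q by (intro geom_summable) auto

lemma geom2: "(\<lambda>(j::nat,k::nat). norm q ^ j * norm q ^ k) summable_on UNIV"
  by (rule prod_summable[OF _ _ geomq geomq]) auto

lemma F_summable: "(\<lambda>(i,j,k). tm q i j k) summable_on UNIV"
proof -
  have g: "(\<lambda>x. CC q ^ 3 * (norm q ^ fst x * (norm q ^ fst (snd x) * norm q ^ snd (snd x)))) summable_on UNIV"
    using summable_on_cmult_right[OF prod_summable[OF _ _ geomq geom2], of "CC q ^ 3"]
    by (simp add: case_prod_beta)
  have "(\<lambda>x. norm (case x of (i,j,k) \<Rightarrow> tm q i j k)) summable_on UNIV"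
    by (rule Infinite_Sum.abs_summable_on_comparison_test'[OF g]) (auto simp: tm_bound)
  thus ?thesis by (rule abs_summable_summable)
qed

lemma F2_summable: "(\<lambda>(j,k). tm q i j k) summable_on UNIV"
proof -
  have g: "(\<lambda>x. CC q ^ 3 * (norm q ^ i * (norm q ^ fst x * norm q ^ snd x))) summable_on UNIV"
    using summable_on_cmult_right[OF geom2, of "CC q ^ 3 * norm q ^ i"]
    by (simp add: case_prod_beta mult_ac)
  have "(\<lambda>x. norm (case x of (j,k) \<Rightarrow> tm q i j k)) summable_on UNIV"
    by (rule Infinite_Sum.abs_summable_on_comparison_test'[OF g]) (auto simp: tm_bound)
  thus ?thesis by (rule abs_summable_summable)
qed

definition TT :: "nat \<Rightarrow> nat \<Rightarrow> complex" where
  "TT i j = q ^ (i^2 + j^2 + (nat \<bar>int i - int j\<bar>)^2) / (qpoch q (2*i) * qpoch q (2*j))"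

lemma TT_summable: "(\<lambda>(i,j). TT i j) summable_on UNIV"
proof -
  have g: "(\<lambda>x. CC q ^ 2 * (norm q ^ fst x * norm q ^ snd x)) summable_on UNIV"
    using summable_on_cmult_right[OF geom2, of "CC q ^ 2"]
    by (simp add: case_prod_beta mult_ac)
  have b: "norm (TT i j) \<le> CC q ^ 2 * (norm q ^ i * norm q ^ j)" for i j
  proof -
    define r where "r = norm q"
    have r: "0 \<le> r" "r \<le> 1" using q by (auto simp: r_def)
    have C0: "0 \<le> CC q" by (simp add: CC_def)
    have "TT i j = q ^ (i^2 + j^2 + (nat \<bar>int i - int j\<bar>)^2) * (1 / qpoch q (2*i)) * (1 / qpoch q (2*j))"
      unfolding TT_def by simp
    hence "norm (TT i j) = r ^ (i^2 + j^2 + (nat \<bar>int i - int j\<bar>)^2) * (norm (1 / qpoch q (2*i)) * norm (1 / qpoch q (2*j)))"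
      unfolding r_def by (simp only: norm_mult norm_power mult.assoc)
    also have "\<dots> \<le> r ^ (i^2 + j^2 + (nat \<bar>int i - int j\<bar>)^2) * (CC q * CC q)"
      by (intro mult_left_mono mult_mono norm_inv_qpoch_nat_le[OF q]) (auto simp: r C0)
    also have "r ^ (i^2 + j^2 + (nat \<bar>int i - int j\<bar>)^2) \<le> r ^ i * r ^ j"
    proof -
      have "r ^ (i^2 + j^2 + (nat \<bar>int i - int j\<bar>)^2) \<le> r ^ (i^2 + j^2)"
        using r by (intro power_decreasing) auto
      also have "\<dots> \<le> r ^ i * r ^ j"
        using pow_sq_le[OF r, of i] pow_sq_le[OF r, of j] r
        by (simp add: power_add) (intro mult_mono, auto)
      finally show ?thesis .
    qed
    hence "r ^ (i^2 + j^2 + (nat \<bar>int i - int j\<bar>)^2) * (CC q * CC q) \<le> r ^ i * r ^ j * (CC q * CC q)"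
      using C0 by (intro mult_right_mono) auto
    finally show ?thesis unfolding r_def by (simp add: power2_eq_square mult_ac)
  qed
  have "(\<lambda>x. norm (case x of (i,j) \<Rightarrow> TT i j)) summable_on UNIV"
    by (rule Infinite_Sum.abs_summable_on_comparison_test'[OF g]) (auto simp: b)
  thus ?thesis by (rule abs_summable_summable)
qed

lemma inner: "infsum (\<lambda>k. tm q i j k) UNIV = TT i j"
proof -
  have "infsum (\<lambda>k. tm q i j k) UNIV = infsum (\<lambda>k. tm q i j k) {..i+j}"
  proof (rule infsum_cong_neutral)
    fix k assume "k \<in> UNIV - {..i+j}"
    hence "int i + int j - int k < 0" by auto
    thus "tm q i j k = 0" unfolding tm_def by (simp add: inv_qpoch_neg)
  qed auto
  also have "\<dots> = (\<Sum>k\<le>i+j. tm q i j k)" by simp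
  also have "\<dots> = TT i j" unfolding TT_def by (rule T_all[OF q])
  finally show ?thesis .
qed

lemma main_eq: "infsum (\<lambda>(i,j,k). tm q i j k) UNIV = infsum (\<lambda>(i,j). TT i j) UNIV"
proof -
  have "infsum (\<lambda>(i,j,k). tm q i j k) UNIV
      = infsum (\<lambda>i. infsum (\<lambda>y. (\<lambda>(i,j,k). tm q i j k) (i,y)) UNIV) UNIV"
    using infsum_Sigma_banach[of "\<lambda>(i,j,k). tm q i j k" UNIV "\<lambda>_. UNIV"] F_summable by simp
  also have "\<dots> = infsum (\<lambda>i. infsum (\<lambda>j. TT i j) UNIV) UNIV"
  proof (rule infsum_cong)
    fix i
    have "infsum (\<lambda>y. (\<lambda>(i,j,k). tm q i j k) (i,y)) UNIV = infsum (\<lambda>(j,k). tm q i j k) UNIV"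
      by (rule infsum_cong) (simp split: prod.split)
    also have "\<dots> = infsum (\<lambda>j. infsum (\<lambda>k. (\<lambda>(j,k). tm q i j k) (j,k)) UNIV) UNIV"
      using infsum_Sigma_banach[of "\<lambda>(j,k). tm q i j k" UNIV "\<lambda>_. UNIV"] F2_summable[of i] by simp
    also have "\<dots> = infsum (\<lambda>j. TT i j) UNIV" by (simp add: inner)
    finally show "infsum (\<lambda>y. (\<lambda>(i,j,k). tm q i j k) (i,y)) UNIV = infsum (\<lambda>j. TT i j) UNIV" .
  qed
  also have "\<dots> = infsum (\<lambda>(i,j). TT i j) UNIV"
    using infsum_Sigma_banach[of "\<lambda>(i,j). TT i j" UNIV "\<lambda>_. UNIV"] TT_summable by simp
  finally show ?thesis .
qed

end

theorem mainTheorem16: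
  fixes q :: complex
  assumes "norm q < 1"
  shows "(\<Sum>\<^sub>\<infinity>(i,j,k)\<in>(UNIV :: (nat \<times> nat \<times> nat) set).
            q ^ (i^2 + j^2 + k^2)
            * inv_qpoch q (int i + int j - int k)
            * inv_qpoch q (int i + int k - int j)
            * inv_qpoch q (int j + int k - int i))
       = (\<Sum>\<^sub>\<infinity>(i,j)\<in>(UNIV :: (nat \<times> nat) set).
            q ^ (i^2 + j^2 + (nat \<bar>int i - int j\<bar>)^2) / (qpoch q (2*i) * qpoch q (2*j)))"
  using main_eq[OF assms] unfolding tm_def TT_def[OF assms] .

end
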